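(* In the SBORS setting described in the context, for any round $t\le T$, any item $i\in\{1,\dots,N\}$ and any $r>1$, $$P\big(|u_i'(t)-\hat u_i(t)|>4\hat\sigma_{u_i}(t)\sqrt{\log (rR)}\big)\le\frac{1}{r^8R^7},\qquad P\big(|q'(t)-\hat q(t)|>4\hat\sigma_q(t)\sqrt{\log (rR)}\big)\le\frac{1}{r^8R^7}.$$
   Context: SBORS, with parameters $\alpha>0,\beta\ge2$ and integer $R\ge1$, maintains for each item $i$ of $N$ items a count $T_i(t)$ of views and estimate $\hat u_i(t)\in[0,1]$, and a count $N_q(t)$ and estimate $\hat q(t)\in[0,1]$, and sets $\hat\sigma_{u_i}(t)=\sqrt{\alpha\hat u_i(t)(1-\hat u_i(t))/(T_i(t)+1)}+\sqrt{\beta/T_i(t)}$, $\hat\sigma_q(t)=\sqrt{\alpha\hat q(t)(1-\hat q(t))/(N_q(t)+1)}+\sqrt{\beta/N_q(t)}$. In round $t$ it draws $\theta^{(1)},\dots,\theta^{(R)}$ i.i.d. $N(0,1)$, independently of the past, and sets $u_i'(t)=\max_{j\le R}\big(\hat u_i(t)+\theta^{(j)}\hat\sigma_{u_i}(t)\big)$ and $q'(t)=\max_{j\le R}\big(\hat q(t)+\theta^{(j)}\hat\sigma_q(t)\big)$. *)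

theory Defs
  imports "HOL-Probability.Probability"
begin

definition std_normal_measure :: "real measure" where
  "std_normal_measure = density lborel (\<lambda>x. ennreal (std_normal_density x))"

text \<open>Joint law of the R i.i.d. N(0,1) samples theta^(1..R) drawn in one round
  (indexed by j < R).\<close>
definition theta_space :: "nat \<Rightarrow> (nat \<Rightarrow> real) measure" where
  "theta_space R = PiM {..<R} (\<lambda>_. std_normal_measure)"

definition sbors_sigma :: "real \<Rightarrow> real \<Rightarrow> real \<Rightarrow> nat \<Rightarrow> real" where
  "sbors_sigma \<alpha> \<beta> est n =
     sqrt (\<alpha> * est * (1 - est) / (real n + 1)) + sqrt (\<beta> / real n)"

definition sbors_sample :: "nat \<Rightarrow> real \<Rightarrow> real \<Rightarrow> (nat \<Rightarrow> real) \<Rightarrow> real" where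
  "sbors_sample R est sig \<theta> = Max ((\<lambda>j. est + \<theta> j * sig) ` {..<R})"

end

theory Submission
  imports Defs
begin

lemma std_prob: "prob_space std_normal_measure"
  unfolding std_normal_measure_def by (rule prob_space_normal_density) simp

lemma sets_std[measurable_cong]: "sets std_normal_measure = sets borel"
  by (simp add: std_normal_measure_def)

lemma phi_shift:
  assumes "0 \<le> c" "c \<le> x"
  shows "std_normal_density x \<le> exp (- c\<^sup>2 / 2) * std_normal_density (x - c)"
proof -
  have "- x\<^sup>2 / 2 \<le> - c\<^sup>2 / 2 + - (x - c)\<^sup>2 / 2"
  proof -
    have "0 \<le> c * (x - c)" using assms by simp
    then show ?thesis by (simp add: power2_eq_square algebra_simps)
  qed
  then have "exp (- x\<^sup>2 / 2) \<le> exp (- c\<^sup>2 / 2) * exp (- (x - c)\<^sup>2 / 2)"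
    by (simp add: exp_add[symmetric])
  then show ?thesis unfolding std_normal_density_def
    by (simp add: mult.left_commute divide_right_mono)
qed

lemma gauss_tail:
  assumes "0 \<le> c"
  shows "measure std_normal_measure {x. c < \<bar>x\<bar>} \<le> exp (- c\<^sup>2 / 2)"
proof -
  let ?f = "\<lambda>x. ennreal (std_normal_density x)"
  define J where "J = (\<integral>\<^sup>+y. ?f y * indicator {0<..} y \<partial>lborel)"
  have tot: "(\<integral>\<^sup>+y. ?f y \<partial>lborel) = 1"
    using prob_space.emeasure_space_1[OF std_prob]
    by (simp add: std_normal_measure_def emeasure_density)
  have I1: "(\<integral>\<^sup>+x. ?f (x - c) * indicator {c<..} x \<partial>lborel) = J"
    unfolding J_def
    by (subst nn_integral_real_affine[where c=1 and t=c]) (auto simp: indicator_def)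
  have I2: "(\<integral>\<^sup>+x. ?f (- x - c) * indicator {..<-c} x \<partial>lborel) = J"
    unfolding J_def
    by (subst nn_integral_real_affine[where c="-1" and t="-c"]) (auto simp: indicator_def)
  have I3: "(\<integral>\<^sup>+x. ?f x * indicator {..<0} x \<partial>lborel) = J"
    unfolding J_def
    by (subst nn_integral_real_affine[where c="-1" and t="0"])
       (auto simp: indicator_def std_normal_density_def)
  have "J + J = (\<integral>\<^sup>+x. ?f x * indicator {0<..} x + ?f x * indicator {..<0} x \<partial>lborel)"
    by (subst nn_integral_add) (auto simp: J_def I3)
  also have "\<dots> \<le> (\<integral>\<^sup>+y. ?f y \<partial>lborel)"
    by (intro nn_integral_mono) (auto simp: indicator_def)
  finally have JJ: "J + J \<le> 1" using tot by simp
  have "emeasure std_normal_measure {x. c < \<bar>x\<bar>} = (\<integral>\<^sup>+x. ?f x * indicator {x. c < \<bar>x\<bar>} x \<partial>lborel)"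
    unfolding std_normal_measure_def
    by (subst emeasure_density) (auto simp: mult.commute)
  also have "\<dots> \<le> (\<integral>\<^sup>+x. ennreal (exp (- c\<^sup>2 / 2)) * (?f (x - c) * indicator {c<..} x + ?f (- x - c) * indicator {..<-c} x) \<partial>lborel)"
  proof (intro nn_integral_mono)
    fix x :: real
    show "?f x * indicator {x. c < \<bar>x\<bar>} x \<le> ennreal (exp (- c\<^sup>2 / 2)) * (?f (x - c) * indicator {c<..} x + ?f (- x - c) * indicator {..<-c} x)"
    proof (cases "c < x")
      case True
      then show ?thesis using phi_shift[of c x] assms
        by (auto simp: indicator_def ennreal_mult[symmetric] intro!: ennreal_leI)
    next
      case False
      show ?thesis
      proof (cases "x < -c")
        case True
        have "std_normal_density x = std_normal_density (-x)" by (simp add: std_normal_density_def)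
        then show ?thesis using phi_shift[of c "-x"] assms True False
          by (auto simp: indicator_def ennreal_mult[symmetric] intro!: ennreal_leI)
      next
        case False2: False
        then show ?thesis using False by (auto simp: indicator_def)
      qed
    qed
  qed
  also have "\<dots> = ennreal (exp (- c\<^sup>2 / 2)) * (J + J)"
    by (subst nn_integral_cmult) (auto simp: nn_integral_add I1 I2)
  also have "\<dots> \<le> ennreal (exp (- c\<^sup>2 / 2)) * 1"
    by (intro mult_left_mono JJ) auto
  finally have "emeasure std_normal_measure {x. c < \<bar>x\<bar>} \<le> ennreal (exp (- c\<^sup>2 / 2))" by simp
  then show ?thesis
    using finite_measure.emeasure_eq_measure[OF prob_space.finite_measure[OF std_prob]] by (simp add: ennreal_le_iff2)
qed

lemma event_subset:
  assumes R: "R \<ge> 1" and sig: "sig \<ge> 0" and c: "c \<ge> 0"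
    and th: "\<bar>sbors_sample R est sig \<theta> - est\<bar> > c * sig"
  shows "\<exists>j<R. c < \<bar>\<theta> j\<bar>"
proof -
  let ?S = "(\<lambda>j. est + \<theta> j * sig) ` {..<R}"
  have fin: "finite ?S" by auto
  have ne: "?S \<noteq> {}" using R by (auto simp: lessThan_empty_iff)
  have mS: "Max ?S \<in> ?S" using Max_in[OF fin ne] .
  have ub: "\<And>j. j < R \<Longrightarrow> est + \<theta> j * sig \<le> Max ?S" using Max_ge[OF fin] by blast
  from mS obtain j where j: "j < R" "Max ?S = est + \<theta> j * sig" by auto
  have m: "sbors_sample R est sig \<theta> = Max ?S" by (simp add: sbors_sample_def)
  show ?thesis
  proof (cases "Max ?S - est > c * sig")
    case True
    then have "c * sig < \<theta> j * sig" using j by simp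
    then have "c < \<theta> j" using sig by (metis mult_right_less_imp_less)
    then show ?thesis using j by auto
  next
    case False
    then have "est - Max ?S > c * sig" using th m by auto
    moreover have "est + \<theta> 0 * sig \<le> Max ?S" using ub R by auto
    ultimately have "(- \<theta> 0) * sig > c * sig" by simp
    then have "c < - \<theta> 0" using sig by (metis mult_right_less_imp_less)
    then show ?thesis using R by (intro exI[of _ 0]) auto
  qed
qed

lemma sample_bound:
  assumes R: "R \<ge> 1" and sig: "sig \<ge> 0" and L: "L \<ge> 0"
  shows "measure (theta_space R)
           {\<theta> \<in> space (theta_space R). \<bar>sbors_sample R est sig \<theta> - est\<bar> > 4 * sig * sqrt L}
         \<le> real R * exp (- 8 * L)"
proof -
  define c where "c = 4 * sqrt L"
  have c0: "c \<ge> 0" using L by (simp add: c_def)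
  have cL: "- c\<^sup>2 / 2 = - 8 * L" using L by (simp add: c_def power2_eq_square algebra_simps)
  let ?P = "theta_space R"
  have P: "prob_space ?P" unfolding theta_space_def
    by (intro prob_space_PiM std_prob)
  have comp: "distr ?P std_normal_measure (\<lambda>\<omega>. \<omega> j) = std_normal_measure" if "j < R" for j
    unfolding theta_space_def using that by (intro distr_PiM_component std_prob) auto
  have sets: "{\<theta> \<in> space ?P. c < \<bar>\<theta> j\<bar>} \<in> sets ?P" if "j < R" for j
  proof -
    have "j \<in> {..<R}" using that by simp
    then show ?thesis unfolding theta_space_def by measurable
  qed
  have each: "measure ?P {\<theta> \<in> space ?P. c < \<bar>\<theta> j\<bar>} \<le> exp (- 8 * L)" if j: "j < R" for j
  proof -
    have meas: "(\<lambda>\<omega>. \<omega> j) \<in> measurable ?P std_normal_measure"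
      unfolding theta_space_def using j
      by (intro measurable_component_singleton) auto
    have "measure ?P {\<theta> \<in> space ?P. c < \<bar>\<theta> j\<bar>}
        = measure (distr ?P std_normal_measure (\<lambda>\<omega>. \<omega> j)) {x. c < \<bar>x\<bar>}"
      by (subst measure_distr[OF meas]) (auto simp: std_normal_measure_def intro!: arg_cong[where f="measure ?P"])
    also have "\<dots> = measure std_normal_measure {x. c < \<bar>x\<bar>}" using comp[OF j] by simp
    also have "\<dots> \<le> exp (- 8 * L)" using gauss_tail[OF c0] cL by simp
    finally show ?thesis .
  qed
  have "measure ?P {\<theta> \<in> space ?P. \<bar>sbors_sample R est sig \<theta> - est\<bar> > 4 * sig * sqrt L}
      \<le> measure ?P (\<Union>j\<in>{..<R}. {\<theta> \<in> space ?P. c < \<bar>\<theta> j\<bar>})"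
  proof (rule finite_measure.finite_measure_mono[OF prob_space.finite_measure[OF P]])
    show "{\<theta> \<in> space ?P. \<bar>sbors_sample R est sig \<theta> - est\<bar> > 4 * sig * sqrt L}
        \<subseteq> (\<Union>j\<in>{..<R}. {\<theta> \<in> space ?P. c < \<bar>\<theta> j\<bar>})"
    proof
      fix \<theta> assume "\<theta> \<in> {\<theta> \<in> space ?P. \<bar>sbors_sample R est sig \<theta> - est\<bar> > 4 * sig * sqrt L}"
      then have "\<theta> \<in> space ?P" "\<bar>sbors_sample R est sig \<theta> - est\<bar> > c * sig"
        by (auto simp: c_def mult_ac)
      then show "\<theta> \<in> (\<Union>j\<in>{..<R}. {\<theta> \<in> space ?P. c < \<bar>\<theta> j\<bar>})"
        using event_subset[OF R sig c0] by blast
    qed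
    show "(\<Union>j\<in>{..<R}. {\<theta> \<in> space ?P. c < \<bar>\<theta> j\<bar>}) \<in> sets ?P"
      using sets by auto
  qed
  also have "\<dots> \<le> (\<Sum>j\<in>{..<R}. measure ?P {\<theta> \<in> space ?P. c < \<bar>\<theta> j\<bar>})"
    by (rule measure_UNION_le) (auto intro: sets)
  also have "\<dots> \<le> (\<Sum>j\<in>{..<R}. exp (- 8 * L))"
    by (rule sum_mono) (rule each, simp)
  also have "\<dots> = real R * exp (- 8 * L)" by simp
  finally show ?thesis .
qed


lemma sigma_nonneg:
  assumes "\<alpha> > 0" "\<beta> \<ge> 2" "0 \<le> est" "est \<le> 1"
  shows "sbors_sigma \<alpha> \<beta> est n \<ge> 0"
  unfolding sbors_sigma_def using assms by (intro add_nonneg_nonneg) auto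

lemma final_arith:
  fixes R :: nat and r :: real
  assumes "R \<ge> 1" "r > 1"
  shows "real R * exp (- 8 * ln (r * real R)) = 1 / (r ^ 8 * real R ^ 7)"
proof -
  have pos: "r * real R > 0" using assms by simp
  have "exp (- 8 * ln (r * real R)) = 1 / (r * real R) ^ 8"
  proof -
    have "exp (8 * ln (r * real R)) = (r * real R) ^ 8"
      using pos by (metis exp_ln exp_of_nat_mult of_nat_numeral)
    then show ?thesis by (simp add: exp_minus divide_inverse)
  qed
  have R0: "real R > 0" using assms by simp
  have e: "real R ^ 8 = real R * real R ^ 7" by (simp add: eval_nat_numeral)
  have "real R * exp (- 8 * ln (r * real R)) = real R * (1 / (r * real R) ^ 8)"
    by (simp only: \<open>exp (- 8 * ln (r * real R)) = 1 / (r * real R) ^ 8\<close>)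
  also have "\<dots> = real R / (r ^ 8 * (real R * real R ^ 7))"
    by (simp only: power_mult_distrib e) simp
  also have "\<dots> = 1 / (r ^ 8 * real R ^ 7)" using R0 by (simp add: field_simps)
  finally show ?thesis .
qed

theorem lemma3:
  fixes N T t i R :: nat and \<alpha> \<beta> r :: real
    and u_hat :: "nat \<Rightarrow> nat \<Rightarrow> real" and T_cnt :: "nat \<Rightarrow> nat \<Rightarrow> nat"
    and q_hat :: "nat \<Rightarrow> real" and N_q :: "nat \<Rightarrow> nat"
  assumes "\<alpha> > 0" and "\<beta> \<ge> 2" and "R \<ge> 1" and "r > 1"
    and "t \<le> T" and "i \<in> {1..N}"
    and "\<And>k s. 0 \<le> u_hat k s \<and> u_hat k s \<le> 1"
    and "\<And>s. 0 \<le> q_hat s \<and> q_hat s \<le> 1"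
  shows "measure (theta_space R)
           {\<theta> \<in> space (theta_space R).
              \<bar>sbors_sample R (u_hat i t) (sbors_sigma \<alpha> \<beta> (u_hat i t) (T_cnt i t)) \<theta> - u_hat i t\<bar>
                > 4 * sbors_sigma \<alpha> \<beta> (u_hat i t) (T_cnt i t) * sqrt (ln (r * real R))}
           \<le> 1 / (r ^ 8 * real R ^ 7)
       \<and> measure (theta_space R)
           {\<theta> \<in> space (theta_space R).
              \<bar>sbors_sample R (q_hat t) (sbors_sigma \<alpha> \<beta> (q_hat t) (N_q t)) \<theta> - q_hat t\<bar>
                > 4 * sbors_sigma \<alpha> \<beta> (q_hat t) (N_q t) * sqrt (ln (r * real R))}
           \<le> 1 / (r ^ 8 * real R ^ 7)"
proof -
  have L: "ln (r * real R) \<ge> 0" proof -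
    have "1 \<le> real R" using assms(3) by simp
    then have "1 \<le> r * real R" using assms(4) by (metis less_eq_real_def mult_mono' mult_1_left zero_le_one)
    then show ?thesis by simp
  qed
  have s1: "sbors_sigma \<alpha> \<beta> (u_hat i t) (T_cnt i t) \<ge> 0"
    using assms(1,2,7) sigma_nonneg by blast
  have s2: "sbors_sigma \<alpha> \<beta> (q_hat t) (N_q t) \<ge> 0"
    using assms(1,2,8) sigma_nonneg by blast
  show ?thesis
    using sample_bound[OF assms(3) s1 L, of "u_hat i t"] sample_bound[OF assms(3) s2 L, of "q_hat t"]
      final_arith[OF assms(3,4)] by simp
qed

end
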